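(* Let $N\ge 2$. For every $N$-player game $G$ and every player $i\in A$, $$R_i(G)\le (N-1)\sum_{j\in A,\,j\neq i}R_j(G).$$
   Context: Let $A=\{1,\dots,N\}$ be a finite set of players. A game is any function $G:2^A\to\mathbb{R}$ (no normalization such as $G(\emptyset)=0$ is assumed). For a player $i$ and a coalition $S\subseteq A\setminus\{i\}$, the marginal contribution is $d_iG(S)=G(S\cup\{i\})-G(S)$. Let $f_i$ be a random subset of $A\setminus\{i\}$ with distribution $\Pr\{f_i=S\}=\frac{|S|!\,(N-|S|-1)!}{N!}$ for each $S\subseteq A\setminus\{i\}$. The Shapley value of $G$ for player $i$ is $V_i(G)=\mathbf{E}[d_iG(f_i)]$ and the Shapley uncertainty of $G$ for player $i$ is $R_i(G)=\mathrm{Var}[d_iG(f_i)]$. *)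

theory Defs
  imports Complex_Main
begin

definition players :: "nat \<Rightarrow> nat set" where
  "players N = {1..N}"

definition marg :: "(nat set \<Rightarrow> real) \<Rightarrow> nat \<Rightarrow> nat set \<Rightarrow> real" where
  "marg G i S = G (S \<union> {i}) - G S"

definition shapley_weight :: "nat \<Rightarrow> nat set \<Rightarrow> real" where
  "shapley_weight N S = fact (card S) * fact (N - card S - 1) / fact N"

definition shapley_value :: "nat \<Rightarrow> (nat set \<Rightarrow> real) \<Rightarrow> nat \<Rightarrow> real" where
  "shapley_value N G i =
     (\<Sum>S\<in>Pow (players N - {i}). shapley_weight N S * marg G i S)"

definition shapley_uncertainty :: "nat \<Rightarrow> (nat set \<Rightarrow> real) \<Rightarrow> nat \<Rightarrow> real" where
  "shapley_uncertainty N G i =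
     (\<Sum>S\<in>Pow (players N - {i}).
        shapley_weight N S * (marg G i S - shapley_value N G i)^2)"

end

theory Submission
  imports Defs "HOL-Combinatorics.Multiset_Permutations" "HOL-Analysis.Convex"
begin

definition pre :: "nat \<Rightarrow> nat list \<Rightarrow> nat set" where
  "pre j xs = set (takeWhile (\<lambda>x. x \<noteq> j) xs)"

lemma pre_split: "j \<notin> set u \<Longrightarrow> pre j (u @ j # v) = set u"
  unfolding pre_def by (induction u) auto

lemma tw_split: "j \<notin> set u \<Longrightarrow> takeWhile (\<lambda>x. x \<noteq> j) (u @ j # v) = u"
  by (induction u) auto

lemma dw_split: "j \<notin> set u \<Longrightarrow> dropWhile (\<lambda>x. x \<noteq> j) (u @ j # v) = j # v"
  by (induction u) auto

lemma count_pre: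
  assumes fin: "finite A" and j: "j \<in> A" and S: "S \<subseteq> A - {j}"
  shows "card {xs \<in> permutations_of_set A. pre j xs = S}
           = fact (card S) * fact (card A - card S - 1)"
proof -
  let ?f = "\<lambda>(u,v). u @ j # v"
  let ?D = "permutations_of_set S \<times> permutations_of_set (A - S - {j})"
  have eq: "{xs \<in> permutations_of_set A. pre j xs = S} = ?f ` ?D"
  proof
    show "?f ` ?D \<subseteq> {xs \<in> permutations_of_set A. pre j xs = S}"
    proof clarify
      fix u v assume u: "u \<in> permutations_of_set S" and v: "v \<in> permutations_of_set (A - S - {j})"
      have su: "set u = S" "distinct u" and sv: "set v = A - S - {j}" "distinct v"
        using u v by (auto dest: permutations_of_setD)
      have "j \<notin> set u" using su S by auto
      moreover have "u @ j # v \<in> permutations_of_set A"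
        using su sv S j by (intro permutations_of_setI) auto
      ultimately show "u @ j # v \<in> permutations_of_set A \<and> pre j (u @ j # v) = S"
        using pre_split su by auto
    qed
  next
    show "{xs \<in> permutations_of_set A. pre j xs = S} \<subseteq> ?f ` ?D"
    proof
      fix xs assume "xs \<in> {xs \<in> permutations_of_set A. pre j xs = S}"
      then have xs: "xs \<in> permutations_of_set A" and p: "pre j xs = S" by auto
      have sx: "set xs = A" "distinct xs" using xs by (auto dest: permutations_of_setD)
      then obtain u v where uv: "xs = u @ j # v" "j \<notin> set u"
        using j split_list_first by metis
      have "set u = S" using p pre_split uv by auto
      moreover have "set v = A - S - {j}" using sx uv \<open>set u = S\<close> by auto
      ultimately have "(u, v) \<in> ?D" using sx uv by auto
      then show "xs \<in> ?f ` ?D" using uv by force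
    qed
  qed
  have inj: "inj_on ?f ?D"
  proof (rule inj_onI)
    fix a b assume a: "a \<in> ?D" and b: "b \<in> ?D" and e: "?f a = ?f b"
    obtain u v where a': "a = (u, v)" by force
    obtain u' v' where b': "b = (u', v')" by force
    have "j \<notin> set u" "j \<notin> set u'" using a b a' b' S by (auto dest: permutations_of_setD)
    moreover have "u @ j # v = u' @ j # v'" using e a' b' by simp
    ultimately have "u = u'" "v = v'" using tw_split dw_split by (metis list.inject)+
    then show "a = b" using a' b' by simp
  qed
  have fS: "finite S" using fin S finite_subset by blast
  have cS: "card (A - S - {j}) = card A - card S - 1"
  proof -
    have "card (A - S - {j}) = card (A - S) - 1" using fin j S by (intro card_Diff_singleton) auto
    also have "card (A - S) = card A - card S" using fin S fS by (intro card_Diff_subset) auto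
    finally show ?thesis by simp
  qed
  show ?thesis
    unfolding eq card_image[OF inj] card_cartesian_product
    using fS fin cS by simp
qed

lemma pre_subset: "xs \<in> permutations_of_set A \<Longrightarrow> pre j xs \<subseteq> A - {j}"
  unfolding pre_def by (auto dest: permutations_of_setD set_takeWhileD)

lemma weighted_sum_perm:
  fixes h :: "nat set \<Rightarrow> real"
  assumes fin: "finite A" and j: "j \<in> A"
  shows "(\<Sum>S\<in>Pow (A - {j}). fact (card S) * fact (card A - card S - 1) / fact (card A) * h S)
         = (\<Sum>xs\<in>permutations_of_set A. h (pre j xs)) / fact (card A)"
proof -
  have "(\<Sum>xs\<in>permutations_of_set A. h (pre j xs))
      = (\<Sum>S\<in>Pow (A - {j}). \<Sum>xs\<in>{xs \<in> permutations_of_set A. pre j xs = S}. h (pre j xs))"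
    by (rule sum.group[symmetric]) (use fin pre_subset in auto)
  also have "\<dots> = (\<Sum>S\<in>Pow (A - {j}). real (card {xs \<in> permutations_of_set A. pre j xs = S}) * h S)"
    by (rule sum.cong) auto
  also have "\<dots> = (\<Sum>S\<in>Pow (A - {j}). fact (card S) * fact (card A - card S - 1) * h S)"
    by (rule sum.cong) (use count_pre[OF fin j] in auto)
  finally show ?thesis
    by (simp add: sum_divide_distrib)
qed

lemma telescope:
  fixes G :: "nat set \<Rightarrow> real"
  shows "distinct xs \<Longrightarrow>
   (\<Sum>j\<in>set xs. G (B \<union> pre j xs \<union> {j}) - G (B \<union> pre j xs)) = G (B \<union> set xs) - G B"
proof (induction xs arbitrary: B)
  case Nil
  then show ?case by simp
next
  case (Cons x xs)
  have px: "pre x (x # xs) = {}" unfolding pre_def by simp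
  have pj: "pre j (x # xs) = insert x (pre j xs)" if "j \<in> set xs" for j
    using that Cons.prems unfolding pre_def by auto
  have "(\<Sum>j\<in>set (x # xs). G (B \<union> pre j (x # xs) \<union> {j}) - G (B \<union> pre j (x # xs)))
     = (G (B \<union> {x}) - G B) + (\<Sum>j\<in>set xs. G (B \<union> pre j (x # xs) \<union> {j}) - G (B \<union> pre j (x # xs)))"
    using Cons.prems px by (simp add: sum.insert)
  also have "(\<Sum>j\<in>set xs. G (B \<union> pre j (x # xs) \<union> {j}) - G (B \<union> pre j (x # xs)))
     = (\<Sum>j\<in>set xs. G (insert x B \<union> pre j xs \<union> {j}) - G (insert x B \<union> pre j xs))"
    by (rule sum.cong) (simp_all add: pj)
  also have "\<dots> = G (insert x B \<union> set xs) - G (insert x B)"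
    using Cons.IH[of "insert x B"] Cons.prems by simp
  finally show ?case by simp
qed

theorem mainTheorem5:
  fixes N :: nat and G :: "nat set \<Rightarrow> real" and i :: nat
  assumes "N \<ge> 2" and "i \<in> players N"
  shows "shapley_uncertainty N G i
           \<le> real (N - 1) * (\<Sum>j\<in>players N - {i}. shapley_uncertainty N G j)"
proof -
  define A where "A = players N"
  define P where "P = permutations_of_set A"
  have fin: "finite A" and cA: "card A = N" unfolding A_def players_def by auto
  have iA: "i \<in> A" using assms A_def by simp
  have finP: "finite P" unfolding P_def by simp
  have cP: "card P = fact N" unfolding P_def using fin cA by simp
  define X where "X j xs = marg G j (pre j xs)" for j xs
  define V where "V j = shapley_value N G j" for j
  have E: "(\<Sum>S\<in>Pow (A - {j}). shapley_weight N S * h S) = (\<Sum>xs\<in>P. h (pre j xs)) / fact N"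
    if "j \<in> A" for j and h :: "nat set \<Rightarrow> real"
    using weighted_sum_perm[OF fin that, of h] cA unfolding shapley_weight_def P_def by simp
  have Vdef: "V j = (\<Sum>xs\<in>P. X j xs) / fact N" if "j \<in> A" for j
    unfolding V_def shapley_value_def A_def[symmetric] X_def using E[OF that, of "marg G j"] by simp
  have Rdef: "shapley_uncertainty N G j = (\<Sum>xs\<in>P. (X j xs - V j)^2) / fact N" if "j \<in> A" for j
    unfolding V_def shapley_uncertainty_def A_def[symmetric] X_def
    using E[OF that, of "\<lambda>S. (marg G j S - shapley_value N G j)^2"] by simp
  have tot: "(\<Sum>j\<in>A. X j xs) = G A - G {}" if "xs \<in> P" for xs
  proof -
    have "set xs = A" "distinct xs" using that unfolding P_def by (auto dest: permutations_of_setD)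
    then show ?thesis using telescope[of xs G "{}"] unfolding X_def marg_def by simp
  qed
  have sumV: "(\<Sum>j\<in>A. V j) = G A - G {}"
  proof -
    have "(\<Sum>j\<in>A. V j) = (\<Sum>j\<in>A. (\<Sum>xs\<in>P. X j xs) / fact N)"
      by (rule sum.cong) (simp_all add: Vdef)
    also have "\<dots> = (\<Sum>xs\<in>P. \<Sum>j\<in>A. X j xs) / fact N"
      by (simp add: sum_divide_distrib[symmetric] sum.swap[of _ A])
    also have "\<dots> = (\<Sum>xs\<in>P. G A - G {}) / fact N"
      by (simp add: tot)
    also have "\<dots> = G A - G {}" using cP by simp
    finally show ?thesis .
  qed
  define Y where "Y j xs = X j xs - V j" for j xs
  have Y0: "Y i xs = - (\<Sum>j\<in>A - {i}. Y j xs)" if "xs \<in> P" for xs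
  proof -
    have "(\<Sum>j\<in>A. Y j xs) = 0"
      unfolding Y_def using tot[OF that] sumV by (simp add: sum_subtractf)
    moreover have "(\<Sum>j\<in>A. Y j xs) = Y i xs + (\<Sum>j\<in>A - {i}. Y j xs)"
      using fin iA by (simp add: sum.remove)
    ultimately show ?thesis by linarith
  qed
  have cAi: "card (A - {i}) = N - 1" using fin iA cA by simp
  have pw: "(Y i xs)^2 \<le> real (N - 1) * (\<Sum>j\<in>A - {i}. (Y j xs)^2)" if "xs \<in> P" for xs
  proof -
    have "(Y i xs)^2 = (\<Sum>j\<in>A - {i}. Y j xs)^2" using Y0[OF that] by simp
    also have "\<dots> \<le> (\<Sum>j\<in>A - {i}. (Y j xs)^2) * card (A - {i})"
      by (rule sum_squared_le_sum_of_squares)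
    finally show ?thesis using cAi by (simp add: mult.commute)
  qed
  have "shapley_uncertainty N G i = (\<Sum>xs\<in>P. (Y i xs)^2) / fact N"
    using Rdef[OF iA] unfolding Y_def by simp
  also have "\<dots> \<le> (\<Sum>xs\<in>P. real (N - 1) * (\<Sum>j\<in>A - {i}. (Y j xs)^2)) / fact N"
    by (intro divide_right_mono sum_mono pw) auto
  also have "\<dots> = real (N - 1) * (\<Sum>j\<in>A - {i}. (\<Sum>xs\<in>P. (Y j xs)^2) / fact N)"
    by (simp add: sum_distrib_left[symmetric] sum_divide_distrib[symmetric] sum.swap[of _ "A - {i}"])
  also have "(\<Sum>j\<in>A - {i}. (\<Sum>xs\<in>P. (Y j xs)^2) / fact N)
      = (\<Sum>j\<in>A - {i}. shapley_uncertainty N G j)"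
    by (rule sum.cong) (simp_all add: Rdef Y_def)
  finally show ?thesis unfolding A_def .
qed

end
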